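(* Let $d\ge 3$. In the subKautz digraph $sK(d,2)$, for every vertex $u$, the numbers $n_i$ of vertices at distance $i$ from $u$ are $n_0=1$, $n_1=d-1$, $n_2=(d-1)^2$, $n_3=2(d-1)$, $n_4=1$, and $n_i=0$ for $i\ge5$; moreover $sK(d,2)$ is antipodal. In the cyclic Kautz digraph $CK(d,3)$, for every vertex $u$, the numbers $N_i$ of vertices at distance $i$ from $u$ are $N_0=1$, $N_1=d-1$, $N_2=(d-1)^2$, $N_3=(d-1)^3-1$, $N_4=2(d-1)^2$, $N_5=d-1$, and $N_i=0$ for $i\ge 6$.
   Context: SubKautz digraph $sK(d,2)$: vertices $x_1x_2$ with $x_1\neq x_2$ in $\mathbb Z_{d+1}$; arcs $x_1x_2\to x_2x_3$ for $x_3\neq x_1,x_2$. Cyclic Kautz digraph $CK(d,3)$: vertices $x_1x_2x_3\in\mathbb Z_{d+1}^3$ with $x_1,x_2,x_3$ pairwise distinct; arcs $x_1x_2x_3\to x_2x_3y$ for $y\neq x_2,x_3$. A digraph is antipodal if every vertex $u$ has exactly one vertex $v$ at distance equal to the diameter from $u$, and simultaneously $u$ is at distance equal to the diameter from $v$. *)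

theory Defs
  imports Main "HOL-Library.Extended_Nat"
begin

definition gdist :: "('a \<times> 'a) set \<Rightarrow> 'a \<Rightarrow> 'a \<Rightarrow> enat" where
  "gdist A u v = (if \<exists>n. (u, v) \<in> A ^^ n then enat (LEAST n. (u, v) \<in> A ^^ n) else \<infinity>)"

definition gdiam :: "'a set \<Rightarrow> ('a \<times> 'a) set \<Rightarrow> enat" where
  "gdiam V A = (SUP p \<in> V \<times> V. gdist A (fst p) (snd p))"

definition antipodal :: "'a set \<Rightarrow> ('a \<times> 'a) set \<Rightarrow> bool" where
  "antipodal V A \<longleftrightarrow>
     (\<forall>u\<in>V. (\<exists>!v. v \<in> V \<and> gdist A u v = gdiam V A) \<and>
            (\<forall>v\<in>V. gdist A u v = gdiam V A \<longrightarrow> gdist A v u = gdiam V A))"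

definition nat_dist :: "'a set \<Rightarrow> ('a \<times> 'a) set \<Rightarrow> 'a \<Rightarrow> nat \<Rightarrow> nat" where
  "nat_dist V A u i = card {v \<in> V. gdist A u v = enat i}"

text \<open>SubKautz digraph sK(d,2); Z_{d+1} is represented by {0..d}.\<close>
definition sK_V :: "nat \<Rightarrow> (nat \<times> nat) set" where
  "sK_V d = {(x1, x2). x1 \<le> d \<and> x2 \<le> d \<and> x1 \<noteq> x2}"

definition sK_A :: "nat \<Rightarrow> ((nat \<times> nat) \<times> (nat \<times> nat)) set" where
  "sK_A d = {((x1, x2), (y1, y2)). (x1, x2) \<in> sK_V d \<and> y1 = x2 \<and> y2 \<le> d
                                    \<and> y2 \<noteq> x1 \<and> y2 \<noteq> x2}"

definition CK_V :: "nat \<Rightarrow> (nat \<times> nat \<times> nat) set" where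
  "CK_V d = {(x1, x2, x3). x1 \<le> d \<and> x2 \<le> d \<and> x3 \<le> d \<and>
                           x1 \<noteq> x2 \<and> x1 \<noteq> x3 \<and> x2 \<noteq> x3}"

definition CK_A :: "nat \<Rightarrow> ((nat \<times> nat \<times> nat) \<times> (nat \<times> nat \<times> nat)) set" where
  "CK_A d = {((x1, x2, x3), (y1, y2, y3)). (x1, x2, x3) \<in> CK_V d \<and> y1 = x2 \<and> y2 = x3
                                   \<and> y3 \<le> d \<and> y3 \<noteq> x2 \<and> y3 \<noteq> x3}"

end

theory Submission
  imports Defs
begin

lemma gdist_eqI:
  assumes "(u,v) \<in> A ^^ k" and "\<And>j. j < k \<Longrightarrow> (u,v) \<notin> A ^^ j"
  shows "gdist A u v = enat k"
proof -
  have "(LEAST n. (u, v) \<in> A ^^ n) = k"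
    by (rule Least_equality) (use assms in \<open>auto simp: not_less[symmetric]\<close>)
  thus ?thesis using assms(1) unfolding gdist_def by auto
qed

lemma gd1: "(u,v) \<in> A ^^ 1 \<Longrightarrow> (u,v) \<notin> A ^^ 0 \<Longrightarrow> gdist A u v = enat 1"
  by (rule gdist_eqI) (auto simp del: relpow_1 relpow.simps)
lemma gd2: "(u,v) \<in> A ^^ 2 \<Longrightarrow> (u,v) \<notin> A ^^ 0 \<Longrightarrow> (u,v) \<notin> A ^^ 1 \<Longrightarrow> gdist A u v = enat 2"
proof (rule gdist_eqI)
  fix j :: nat assume "j < 2" "(u,v) \<notin> A ^^ 0" "(u,v) \<notin> A ^^ 1"
  moreover have "j = 0 \<or> j = 1" using \<open>j < 2\<close> by arith
  ultimately show "(u,v) \<notin> A ^^ j" by auto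
qed
lemma gd3: "(u,v) \<in> A ^^ 3 \<Longrightarrow> (u,v) \<notin> A ^^ 0 \<Longrightarrow> (u,v) \<notin> A ^^ 1 \<Longrightarrow> (u,v) \<notin> A ^^ 2 \<Longrightarrow> gdist A u v = enat 3"
proof (rule gdist_eqI)
  fix j :: nat assume "j < 3" "(u,v) \<notin> A ^^ 0" "(u,v) \<notin> A ^^ 1" "(u,v) \<notin> A ^^ 2"
  moreover have "j = 0 \<or> j = 1 \<or> j = 2" using \<open>j < 3\<close> by arith
  ultimately show "(u,v) \<notin> A ^^ j" by auto
qed
lemma gd4: "(u,v) \<in> A ^^ 4 \<Longrightarrow> (u,v) \<notin> A ^^ 0 \<Longrightarrow> (u,v) \<notin> A ^^ 1 \<Longrightarrow> (u,v) \<notin> A ^^ 2 \<Longrightarrow> (u,v) \<notin> A ^^ 3 \<Longrightarrow> gdist A u v = enat 4"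
proof (rule gdist_eqI)
  fix j :: nat assume "j < 4" "(u,v) \<notin> A ^^ 0" "(u,v) \<notin> A ^^ 1" "(u,v) \<notin> A ^^ 2" "(u,v) \<notin> A ^^ 3"
  moreover have "j = 0 \<or> j = 1 \<or> j = 2 \<or> j = 3" using \<open>j < 4\<close> by arith
  ultimately show "(u,v) \<notin> A ^^ j" by auto
qed
lemma gd5: "(u,v) \<in> A ^^ 5 \<Longrightarrow> (u,v) \<notin> A ^^ 0 \<Longrightarrow> (u,v) \<notin> A ^^ 1 \<Longrightarrow> (u,v) \<notin> A ^^ 2 \<Longrightarrow> (u,v) \<notin> A ^^ 3 \<Longrightarrow> (u,v) \<notin> A ^^ 4 \<Longrightarrow> gdist A u v = enat 5"
proof (rule gdist_eqI)
  fix j :: nat assume "j < 5" "(u,v) \<notin> A ^^ 0" "(u,v) \<notin> A ^^ 1" "(u,v) \<notin> A ^^ 2" "(u,v) \<notin> A ^^ 3" "(u,v) \<notin> A ^^ 4"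
  moreover have "j = 0 \<or> j = 1 \<or> j = 2 \<or> j = 3 \<or> j = 4" using \<open>j < 5\<close> by arith
  ultimately show "(u,v) \<notin> A ^^ j" by auto
qed

lemma path2: "(x,y) \<in> R \<Longrightarrow> (y,z) \<in> R \<Longrightarrow> (x,z) \<in> R ^^ 2"
  by (auto simp: numeral_2_eq_2 intro!: relpow_Suc_I2 relpow_0_I)
lemma path3: "(x,y) \<in> R \<Longrightarrow> (y,z) \<in> R \<Longrightarrow> (z,w) \<in> R \<Longrightarrow> (x,w) \<in> R ^^ 3"
  unfolding numeral_3_eq_3 by (rule relpow_Suc_I2, assumption, rule relpow_Suc_I2, assumption, rule relpow_Suc_I2, assumption, rule relpow_0_I)
lemma path4: "(x,y) \<in> R \<Longrightarrow> (y,z) \<in> R \<Longrightarrow> (z,w) \<in> R \<Longrightarrow> (w,t) \<in> R \<Longrightarrow> (x,t) \<in> R ^^ 4"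
proof -
  assume h: "(x,y) \<in> R" "(y,z) \<in> R" "(z,w) \<in> R" "(w,t) \<in> R"
  have "(x,t) \<in> R ^^ Suc 3" by (rule relpow_Suc_I2[OF h(1) path3[OF h(2-4)]])
  moreover have e: "Suc 3 = (4::nat)" by simp
  ultimately show ?thesis by (simp only: e)
qed
lemma path5: "(x,y) \<in> R \<Longrightarrow> (y,z) \<in> R \<Longrightarrow> (z,w) \<in> R \<Longrightarrow> (w,t) \<in> R \<Longrightarrow> (t,s) \<in> R \<Longrightarrow> (x,s) \<in> R ^^ 5"
proof -
  assume h: "(x,y) \<in> R" "(y,z) \<in> R" "(z,w) \<in> R" "(w,t) \<in> R" "(t,s) \<in> R"
  have "(x,s) \<in> R ^^ Suc 4" by (rule relpow_Suc_I2[OF h(1) path4[OF h(2-5)]])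
  moreover have e: "Suc 4 = (5::nat)" by simp
  ultimately show ?thesis by (simp only: e)
qed

lemma fresh3: "3 \<le> (d::nat) \<Longrightarrow> \<exists>y\<le>d. y \<noteq> a \<and> y \<noteq> b \<and> y \<noteq> c"
proof -
  assume "3 \<le> d"
  have "\<exists>y\<le>3::nat. y \<noteq> a \<and> y \<noteq> b \<and> y \<noteq> c" by presburger
  thus ?thesis using \<open>3 \<le> d\<close> by (meson order_trans)
qed

lemma card_minus2: "a \<le> d \<Longrightarrow> b \<le> d \<Longrightarrow> a \<noteq> b \<Longrightarrow> card ({..d} - {a,b}) = d - 1"
  by (subst card_Diff_subset) auto

lemma sK_arc: "((x1,x2),(y1,y2)) \<in> sK_A d \<longleftrightarrow>
   x1\<le>d \<and> x2\<le>d \<and> x1\<noteq>x2 \<and> y1=x2 \<and> y2\<le>d \<and> y2\<noteq>x1 \<and> y2\<noteq>x2"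
  by (auto simp: sK_A_def sK_V_def)

lemma sK_step: "(u, (p,q)) \<in> sK_A d ^^ Suc n \<longleftrightarrow>
   (\<exists>x. (u,(x,p)) \<in> sK_A d ^^ n \<and> x \<le> d \<and> p \<le> d \<and> x \<noteq> p \<and> q \<le> d \<and> q \<noteq> x \<and> q \<noteq> p)"
  by (auto simp: relcomp_unfold sK_arc)

lemma sK_W1: "((a,b),(p,q)) \<in> sK_A d ^^ 1 \<Longrightarrow> p = b \<and> q \<noteq> a"
  unfolding relpow_1 sK_arc by auto

lemma sK_W2: "((a,b),(p,q)) \<in> sK_A d ^^ 2 \<Longrightarrow> p \<noteq> a \<and> p \<noteq> b \<and> q \<noteq> b"
  unfolding numeral_2_eq_2 sK_step relpow.simps(1) by auto

lemma sK_W3: "((a,b),(p,q)) \<in> sK_A d ^^ 3 \<Longrightarrow> p \<noteq> b"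
  unfolding numeral_3_eq_3 sK_step relpow.simps(1) by auto

definition "sD1 d a b = (\<lambda>c. (b,c)) ` ({..d} - {a,b})"
definition "sD2 d a b = Sigma ({..d} - {a,b}) (\<lambda>c. {..d} - {b,c})"
definition "sD3 d a b = (\<lambda>c. (c,b)) ` ({..d} - {a,b}) \<union> (\<lambda>x. (a,x)) ` ({..d} - {a,b})"

lemma sK_dist:
  assumes d: "3 \<le> d" and u: "(a,b) \<in> sK_V d" and v: "v \<in> sK_V d"
  shows "gdist (sK_A d) (a,b) v = enat i \<longleftrightarrow>
    (i = 0 \<and> v = (a,b) \<or> i = 1 \<and> v \<in> sD1 d a b \<or> i = 2 \<and> v \<in> sD2 d a b \<or>
     i = 3 \<and> v \<in> sD3 d a b \<or> i = 4 \<and> v = (b,a))"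
proof -
  obtain p q where pq: "v = (p,q)" by force
  have ab: "a \<le> d" "b \<le> d" "a \<noteq> b" using u by (auto simp: sK_V_def)
  have pqV: "p \<le> d" "q \<le> d" "p \<noteq> q" using v pq by (auto simp: sK_V_def)
  note W1 = sK_W1[of a b p q d] and W2 = sK_W2[of a b p q d] and W3 = sK_W3[of a b p q d]
  have W0: "((a,b),(p,q)) \<in> sK_A d ^^ 0 \<Longrightarrow> p = a \<and> q = b" by simp
  have g0: "v = (a,b) \<Longrightarrow> gdist (sK_A d) (a,b) v = enat 0"
    by (rule gdist_eqI) auto
  have g1: "v \<in> sD1 d a b \<Longrightarrow> gdist (sK_A d) (a,b) v = enat 1"
  proof -
    assume "v \<in> sD1 d a b"
    hence h: "p = b" "q \<le> d" "q \<noteq> a" "q \<noteq> b" using pq by (auto simp: sD1_def)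
    have "((a,b),(p,q)) \<in> sK_A d ^^ 1" using ab h by (simp add: sK_arc)
    thus ?thesis unfolding pq using ab h by (intro gd1) (auto dest!: W0)
  qed
  have g2: "v \<in> sD2 d a b \<Longrightarrow> gdist (sK_A d) (a,b) v = enat 2"
  proof -
    assume "v \<in> sD2 d a b"
    hence pq2: "p \<le> d" "p \<noteq> a" "p \<noteq> b" "q \<le> d" "q \<noteq> b" "q \<noteq> p" using pq by (auto simp: sD2_def)
    have "((a,b),(p,q)) \<in> sK_A d ^^ 2"
      using ab pq2 by (intro path2[of _ "(b,p)"]) (auto simp: sK_arc)
    thus ?thesis unfolding pq using ab pq2 by (intro gd2) (auto simp: sK_arc)
  qed
  have g3: "v \<in> sD3 d a b \<Longrightarrow> gdist (sK_A d) (a,b) v = enat 3"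
  proof -
    assume "v \<in> sD3 d a b"
    hence cs: "(q = b \<and> p \<noteq> a \<and> p \<noteq> b \<and> p \<le> d) \<or> (p = a \<and> q \<noteq> a \<and> q \<noteq> b \<and> q \<le> d)"
      using pq by (auto simp: sD3_def)
    have "((a,b),(p,q)) \<in> sK_A d ^^ 3"
      using cs
    proof
      assume h: "q = b \<and> p \<noteq> a \<and> p \<noteq> b \<and> p \<le> d"
      obtain y where y: "y \<le> d" "y \<noteq> a" "y \<noteq> b" "y \<noteq> p" using fresh3[OF d] by blast
      show ?thesis using ab h y
        by (intro path3[of _ "(b,y)" _ "(y,p)"])
           (auto simp: sK_arc)
    next
      assume h: "p = a \<and> q \<noteq> a \<and> q \<noteq> b \<and> q \<le> d"
      obtain y where y: "y \<le> d" "y \<noteq> a" "y \<noteq> b" "y \<noteq> q" using fresh3[OF d] by blast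
      show ?thesis using ab h y
        by (intro path3[of _ "(b,y)" _ "(y,a)"])
           (auto simp: sK_arc)
    qed
    thus ?thesis unfolding pq using ab cs by (intro gd3) (auto dest!: W2 simp: sK_arc)
  qed
  have g4: "v = (b,a) \<Longrightarrow> gdist (sK_A d) (a,b) v = enat 4"
  proof -
    assume "v = (b,a)"
    hence h: "p = b" "q = a" using pq by auto
    obtain y where y: "y \<le> d" "y \<noteq> a" "y \<noteq> b" using fresh3[OF d] by blast
    obtain z where z: "z \<le> d" "z \<noteq> a" "z \<noteq> b" "z \<noteq> y" using fresh3[OF d] by blast
    have "((a,b),(p,q)) \<in> sK_A d ^^ 4"
      using ab y z h
      by (intro path4[of _ "(b,y)" _ "(y,z)" "(z,b)"]) (auto simp: sK_arc)
    thus ?thesis unfolding pq using ab h by (intro gd4) (auto dest!: sK_W2[of a b b a d] sK_W3[of a b b a d] simp: sK_arc)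
  qed
  have cover: "v = (a,b) \<or> v \<in> sD1 d a b \<or> v \<in> sD2 d a b \<or> v \<in> sD3 d a b \<or> v = (b,a)"
    using pq pqV ab by (auto simp: sD1_def sD2_def sD3_def)
  have disj: "v \<in> sD1 d a b \<Longrightarrow> v \<noteq> (a,b) \<and> v \<noteq> (b,a)"
     "v \<in> sD2 d a b \<Longrightarrow> v \<noteq> (a,b) \<and> v \<noteq> (b,a)"
     "v \<in> sD3 d a b \<Longrightarrow> v \<noteq> (a,b) \<and> v \<noteq> (b,a)"
    "v \<in> sD1 d a b \<Longrightarrow> v \<notin> sD2 d a b \<and> v \<notin> sD3 d a b"
    "v \<in> sD2 d a b \<Longrightarrow> v \<notin> sD3 d a b"
    using ab by (auto simp: sD1_def sD2_def sD3_def)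
  from cover show ?thesis
  proof (elim disjE)
    assume h: "v = (a,b)"
    hence "v \<notin> sD1 d a b" "v \<notin> sD2 d a b" "v \<notin> sD3 d a b" "v \<noteq> (b,a)" using disj ab by auto
    thus ?thesis using g0 h by simp
  next
    assume h: "v \<in> sD1 d a b"
    hence "v \<notin> sD2 d a b" "v \<notin> sD3 d a b" "v \<noteq> (b,a)" "v \<noteq> (a,b)" using disj by auto
    thus ?thesis using g1 h by auto
  next
    assume h: "v \<in> sD2 d a b"
    hence "v \<notin> sD1 d a b" "v \<notin> sD3 d a b" "v \<noteq> (b,a)" "v \<noteq> (a,b)" using disj by auto
    thus ?thesis using g2 h by simp
  next
    assume h: "v \<in> sD3 d a b"
    hence "v \<notin> sD1 d a b" "v \<notin> sD2 d a b" "v \<noteq> (b,a)" "v \<noteq> (a,b)" using disj by auto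
    thus ?thesis using g3 h by simp
  next
    assume h: "v = (b,a)"
    hence "v \<notin> sD1 d a b" "v \<notin> sD2 d a b" "v \<notin> sD3 d a b" "v \<noteq> (a,b)" using disj ab by auto
    thus ?thesis using g4 h by simp
  qed
qed

lemma sD_sub: "a \<le> d \<Longrightarrow> b \<le> d \<Longrightarrow> a \<noteq> b \<Longrightarrow>
   sD1 d a b \<subseteq> sK_V d \<and> sD2 d a b \<subseteq> sK_V d \<and> sD3 d a b \<subseteq> sK_V d"
  by (auto simp: sD1_def sD2_def sD3_def sK_V_def)

lemma sK_levels:
  assumes d: "3 \<le> d" and u: "(a,b) \<in> sK_V d"
  shows "{v \<in> sK_V d. gdist (sK_A d) (a,b) v = enat i} =
    (if i = 0 then {(a,b)} else if i = 1 then sD1 d a b else if i = 2 then sD2 d a b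
     else if i = 3 then sD3 d a b else if i = 4 then {(b,a)} else {})"
proof -
  have ab: "a \<le> d" "b \<le> d" "a \<noteq> b" using u by (auto simp: sK_V_def)
  have ba: "(b,a) \<in> sK_V d" using ab by (auto simp: sK_V_def)
  show ?thesis
    using sK_dist[OF d u] sD_sub[OF ab] u ba by auto
qed

lemma card_sD:
  assumes ab: "a \<le> d" "b \<le> d" "a \<noteq> b"
  shows "card (sD1 d a b) = d - 1" "card (sD2 d a b) = (d - 1)^2" "card (sD3 d a b) = 2 * (d - 1)"
proof -
  have c: "card ({..d} - {a,b}) = d - 1" using card_minus2[OF ab] .
  show "card (sD1 d a b) = d - 1" unfolding sD1_def
    by (subst card_image) (auto intro: inj_onI simp: c)
  have "card (sD2 d a b) = (\<Sum>c\<in>{..d} - {a,b}. card ({..d} - {b,c}))"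
    unfolding sD2_def by (rule card_SigmaI) auto
  also have "\<dots> = (\<Sum>c\<in>{..d} - {a,b}. d - 1)"
    by (rule sum.cong) (auto simp: card_minus2 ab)
  finally show "card (sD2 d a b) = (d - 1)^2" by (simp add: c power2_eq_square)
  have "card (sD3 d a b) = card ((\<lambda>c. (c,b)) ` ({..d} - {a,b})) + card ((\<lambda>x. (a,x)) ` ({..d} - {a,b}))"
    unfolding sD3_def by (rule card_Un_disjoint) auto
  also have "\<dots> = 2 * (d - 1)"
    by (subst card_image, auto intro: inj_onI simp: c)+
  finally show "card (sD3 d a b) = 2 * (d - 1)" .
qed

lemma sK_part:
  assumes d: "3 \<le> d" and u: "u \<in> sK_V d"
  shows "nat_dist (sK_V d) (sK_A d) u 0 = 1 \<and>
            nat_dist (sK_V d) (sK_A d) u 1 = d - 1 \<and>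
            nat_dist (sK_V d) (sK_A d) u 2 = (d - 1)^2 \<and>
            nat_dist (sK_V d) (sK_A d) u 3 = 2 * (d - 1) \<and>
            nat_dist (sK_V d) (sK_A d) u 4 = 1 \<and>
            (\<forall>i\<ge>5. nat_dist (sK_V d) (sK_A d) u i = 0)"
proof -
  obtain a b where u': "u = (a,b)" by force
  have ab: "a \<le> d" "b \<le> d" "a \<noteq> b" using u u' by (auto simp: sK_V_def)
  note L = sK_levels[OF d u[unfolded u'], folded nat_dist_def]
  show ?thesis unfolding u' nat_dist_def using L card_sD[OF ab] by simp
qed

lemma sK_diam:
  assumes d: "3 \<le> d"
  shows "gdiam (sK_V d) (sK_A d) = enat 4"
proof (rule antisym)
  show "gdiam (sK_V d) (sK_A d) \<le> enat 4"
    unfolding gdiam_def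
  proof (rule SUP_least)
    fix p assume "p \<in> sK_V d \<times> sK_V d"
    then obtain a b v where p: "p = ((a,b),v)" "(a,b) \<in> sK_V d" "v \<in> sK_V d" by force
    have ab: "a \<le> d" "b \<le> d" "a \<noteq> b" using p by (auto simp: sK_V_def)
    obtain x y where xy: "v = (x,y)" by force
    have "x \<le> d" "y \<le> d" "x \<noteq> y" using p(3) xy by (auto simp: sK_V_def)
    hence cov: "v = (a,b) \<or> v \<in> sD1 d a b \<or> v \<in> sD2 d a b \<or> v \<in> sD3 d a b \<or> v = (b,a)"
      using ab xy by (auto simp: sD1_def sD2_def sD3_def)
    note D = sK_dist[OF d p(2) p(3)]
    have "\<exists>i\<le>4. gdist (sK_A d) (a,b) v = enat i"
      using cov
    proof (elim disjE)
      assume "v = (a,b)" thus ?thesis using D[of 0] by auto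
    next
      assume "v \<in> sD1 d a b" thus ?thesis using D[of 1] by auto
    next
      assume "v \<in> sD2 d a b" thus ?thesis using D[of 2] by auto
    next
      assume "v \<in> sD3 d a b" thus ?thesis using D[of 3] by auto
    next
      assume "v = (b,a)" thus ?thesis using D[of 4] by auto
    qed
    thus "gdist (sK_A d) (fst p) (snd p) \<le> enat 4" using p by auto
  qed
next
  have u: "(0,1) \<in> sK_V d" "(1,0) \<in> sK_V d" using d by (auto simp: sK_V_def)
  have "gdist (sK_A d) (0,1) (1,0) = enat 4" using sK_dist[OF d u] by simp
  thus "enat 4 \<le> gdiam (sK_V d) (sK_A d)"
    unfolding gdiam_def using u by (intro SUP_upper2[of "((0,1),(1,0))"]) auto
qed

lemma sK_antipodal: assumes d: "3 \<le> d" shows "antipodal (sK_V d) (sK_A d)"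
  unfolding antipodal_def sK_diam[OF d]
proof (rule ballI, rule conjI)
  fix u assume u: "u \<in> sK_V d"
  obtain a b where u': "u = (a,b)" by force
  have ba: "(b,a) \<in> sK_V d" using u u' by (auto simp: sK_V_def)
  have uu: "(a,b) \<in> sK_V d" using u u' by simp
  have eq: "v = (b,a)" if "v \<in> sK_V d" "gdist (sK_A d) (a,b) v = enat 4" for v
    using sK_dist[OF d uu that(1), of 4] that(2) by simp
  have g: "gdist (sK_A d) (a,b) (b,a) = enat 4" using sK_dist[OF d uu ba, of 4] by simp
  have g': "gdist (sK_A d) (b,a) (a,b) = enat 4" using sK_dist[OF d ba uu, of 4] by simp
  show "\<exists>!v. v \<in> sK_V d \<and> gdist (sK_A d) u v = enat 4"
    unfolding u' using eq g ba by blast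
  show "\<forall>v\<in>sK_V d. gdist (sK_A d) u v = enat 4 \<longrightarrow> gdist (sK_A d) v u = enat 4"
    unfolding u' using eq g' by blast
qed


lemma CK_arc: "((x1,x2,x3),(y1,y2,y3)) \<in> CK_A d \<longleftrightarrow>
   x1\<le>d \<and> x2\<le>d \<and> x3\<le>d \<and> x1\<noteq>x2 \<and> x1\<noteq>x3 \<and> x2\<noteq>x3 \<and> y1=x2 \<and> y2=x3 \<and> y3\<le>d \<and> y3\<noteq>x2 \<and> y3\<noteq>x3"
  by (auto simp: CK_A_def CK_V_def)

lemma CK_step: "(u, (p,q,r)) \<in> CK_A d ^^ Suc n \<longleftrightarrow>
   (\<exists>x. (u,(x,p,q)) \<in> CK_A d ^^ n \<and> x \<le> d \<and> p \<le> d \<and> q \<le> d \<and> x \<noteq> p \<and> x \<noteq> q \<and> p \<noteq> q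
        \<and> r \<le> d \<and> r \<noteq> p \<and> r \<noteq> q)"
  by (auto simp: relcomp_unfold CK_arc)

lemma CK_W2: "((a,b,c),(p,q,r)) \<in> CK_A d ^^ 2 \<Longrightarrow> p = c \<and> q \<noteq> b"
  unfolding numeral_2_eq_2 CK_step relpow.simps(1) by auto

lemma CK_W3: "((a,b,c),(p,q,r)) \<in> CK_A d ^^ 3 \<Longrightarrow> p \<noteq> b \<and> p \<noteq> c \<and> q \<noteq> c"
  unfolding numeral_3_eq_3 CK_step relpow.simps(1) by auto

lemma CK_W4: "((a,b,c),(p,q,r)) \<in> CK_A d ^^ 4 \<Longrightarrow> p \<noteq> c"
proof -
  have e: "(4::nat) = Suc 3" by simp
  show "((a,b,c),(p,q,r)) \<in> CK_A d ^^ 4 \<Longrightarrow> p \<noteq> c"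
    unfolding e CK_step numeral_3_eq_3 relpow.simps(1) by auto
qed

definition "cD1 d b c = (\<lambda>y. (b,c,y)) ` ({..d} - {b,c})"
definition "cD2 d b c = (\<lambda>(p,q). (c,p,q)) ` Sigma ({..d} - {b,c}) (\<lambda>p. {..d} - {c,p})"
definition "cW3 d b c = Sigma ({..d} - {b,c}) (\<lambda>p. Sigma ({..d} - {c,p}) (\<lambda>q. {..d} - {p,q}))"
definition "cD4 d b c = (\<lambda>(q,r). (b,q,r)) ` Sigma ({..d} - {b,c}) (\<lambda>q. {..d} - {b,q})
   \<union> (\<lambda>(p,r). (p,c,r)) ` Sigma ({..d} - {b,c}) (\<lambda>p. {..d} - {p,c})"
definition "cD5 d b c = (\<lambda>r. (c,b,r)) ` ({..d} - {b,c})"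

lemma CK_dist:
  assumes d: "3 \<le> d" and u: "(a,b,c) \<in> CK_V d" and v: "v \<in> CK_V d"
  shows "gdist (CK_A d) (a,b,c) v = enat i \<longleftrightarrow>
    (i = 0 \<and> v = (a,b,c) \<or> i = 1 \<and> v \<in> cD1 d b c \<or> i = 2 \<and> v \<in> cD2 d b c \<or>
     i = 3 \<and> v \<in> cW3 d b c - {(a,b,c)} \<or> i = 4 \<and> v \<in> cD4 d b c \<or> i = 5 \<and> v \<in> cD5 d b c)"
proof -
  obtain p q r where pq: "v = (p,q,r)" by (cases v) force
  have ab: "a \<le> d" "b \<le> d" "c \<le> d" "a \<noteq> b" "a \<noteq> c" "b \<noteq> c" using u by (auto simp: CK_V_def)
  have pqV: "p \<le> d" "q \<le> d" "r \<le> d" "p \<noteq> q" "p \<noteq> r" "q \<noteq> r" using v pq by (auto simp: CK_V_def)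
  have g0: "v = (a,b,c) \<Longrightarrow> gdist (CK_A d) (a,b,c) v = enat 0"
    by (rule gdist_eqI) auto
  have g1: "v \<in> cD1 d b c \<Longrightarrow> gdist (CK_A d) (a,b,c) v = enat 1"
  proof -
    assume "v \<in> cD1 d b c"
    hence h: "p = b" "q = c" "r \<le> d" "r \<noteq> b" "r \<noteq> c" using pq by (auto simp: cD1_def)
    have "((a,b,c),(p,q,r)) \<in> CK_A d ^^ 1" using ab h by (simp add: CK_arc)
    thus ?thesis unfolding pq using ab h by (intro gd1) auto
  qed
  have g2: "v \<in> cD2 d b c \<Longrightarrow> gdist (CK_A d) (a,b,c) v = enat 2"
  proof -
    assume "v \<in> cD2 d b c"
    hence h: "p = c" "q \<le> d" "q \<noteq> b" "q \<noteq> c" "r \<le> d" "r \<noteq> c" "r \<noteq> q" using pq by (auto simp: cD2_def)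
    have "((a,b,c),(p,q,r)) \<in> CK_A d ^^ 2"
      using ab h by (intro path2[of _ "(b,c,q)"]) (auto simp: CK_arc)
    thus ?thesis unfolding pq using ab h by (intro gd2) (auto simp: CK_arc)
  qed
  have g3: "v \<in> cW3 d b c - {(a,b,c)} \<Longrightarrow> gdist (CK_A d) (a,b,c) v = enat 3"
  proof -
    assume "v \<in> cW3 d b c - {(a,b,c)}"
    hence h: "p \<le> d" "p \<noteq> b" "p \<noteq> c" "q \<le> d" "q \<noteq> c" "q \<noteq> p" "r \<le> d" "r \<noteq> p" "r \<noteq> q"
      "(p,q,r) \<noteq> (a,b,c)" using pq by (auto simp: cW3_def)
    have "((a,b,c),(p,q,r)) \<in> CK_A d ^^ 3"
      using ab h by (intro path3[of _ "(b,c,p)" _ "(c,p,q)"]) (auto simp: CK_arc)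
    thus ?thesis unfolding pq using ab h by (intro gd3) (auto dest!: CK_W2 simp: CK_arc)
  qed
  have g4: "v \<in> cD4 d b c \<Longrightarrow> gdist (CK_A d) (a,b,c) v = enat 4"
  proof -
    assume "v \<in> cD4 d b c"
    hence cs: "(p = b \<and> q \<le> d \<and> q \<noteq> b \<and> q \<noteq> c \<and> r \<le> d \<and> r \<noteq> b \<and> r \<noteq> q) \<or>
               (q = c \<and> p \<le> d \<and> p \<noteq> b \<and> p \<noteq> c \<and> r \<le> d \<and> r \<noteq> p \<and> r \<noteq> c)"
      using pq by (auto simp: cD4_def)
    have W: "((a,b,c),(p,q,r)) \<notin> CK_A d ^^ 2" "((a,b,c),(p,q,r)) \<notin> CK_A d ^^ 3"
      using cs CK_W2[of a b c p q r d] CK_W3[of a b c p q r d] ab by auto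
    have "((a,b,c),(p,q,r)) \<in> CK_A d ^^ 4"
      using cs
    proof
      assume h: "p = b \<and> q \<le> d \<and> q \<noteq> b \<and> q \<noteq> c \<and> r \<le> d \<and> r \<noteq> b \<and> r \<noteq> q"
      obtain y where y: "y \<le> d" "y \<noteq> b" "y \<noteq> c" "y \<noteq> q" using fresh3[OF d] by blast
      show ?thesis using ab h y
        by (intro path4[of _ "(b,c,y)" _ "(c,y,b)" "(y,b,q)"]) (auto simp: CK_arc)
    next
      assume h: "q = c \<and> p \<le> d \<and> p \<noteq> b \<and> p \<noteq> c \<and> r \<le> d \<and> r \<noteq> p \<and> r \<noteq> c"
      obtain y where y: "y \<le> d" "y \<noteq> b" "y \<noteq> c" "y \<noteq> p" using fresh3[OF d] by blast
      show ?thesis using ab h y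
        by (intro path4[of _ "(b,c,y)" _ "(c,y,p)" "(y,p,c)"]) (auto simp: CK_arc)
    qed
    thus ?thesis unfolding pq using ab cs W by (intro gd4) (auto simp: CK_arc)
  qed
  have g5: "v \<in> cD5 d b c \<Longrightarrow> gdist (CK_A d) (a,b,c) v = enat 5"
  proof -
    assume "v \<in> cD5 d b c"
    hence h: "p = c" "q = b" "r \<le> d" "r \<noteq> b" "r \<noteq> c" using pq by (auto simp: cD5_def)
    have W: "((a,b,c),(p,q,r)) \<notin> CK_A d ^^ 2" "((a,b,c),(p,q,r)) \<notin> CK_A d ^^ 3"
      "((a,b,c),(p,q,r)) \<notin> CK_A d ^^ 4"
      using h CK_W2[of a b c p q r d] CK_W3[of a b c p q r d] CK_W4[of a b c p q r d] ab by auto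
    obtain y where y: "y \<le> d" "y \<noteq> b" "y \<noteq> c" using fresh3[OF d] by blast
    obtain z where z: "z \<le> d" "z \<noteq> b" "z \<noteq> c" "z \<noteq> y" using fresh3[OF d] by blast
    have "((a,b,c),(p,q,r)) \<in> CK_A d ^^ 5"
      using ab h y z
      by (intro path5[of _ "(b,c,y)" _ "(c,y,z)" "(y,z,c)" "(z,c,b)"]) (auto simp: CK_arc)
    thus ?thesis unfolding pq using ab h W by (intro gd5) (auto simp: CK_arc)
  qed
  have cover: "v = (a,b,c) \<or> v \<in> cD1 d b c \<or> v \<in> cD2 d b c \<or> v \<in> cW3 d b c - {(a,b,c)}
     \<or> v \<in> cD4 d b c \<or> v \<in> cD5 d b c"
    using pq pqV ab by (auto simp: cD1_def cD2_def cW3_def cD4_def cD5_def)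
  have m: "v \<in> cD1 d b c \<longleftrightarrow> p = b \<and> q = c"
    "v \<in> cD2 d b c \<longleftrightarrow> p = c \<and> q \<noteq> b"
    "v \<in> cW3 d b c \<longleftrightarrow> p \<noteq> b \<and> p \<noteq> c \<and> q \<noteq> c"
    "v \<in> cD4 d b c \<longleftrightarrow> (p = b \<and> q \<noteq> c) \<or> (p \<noteq> b \<and> p \<noteq> c \<and> q = c)"
    "v \<in> cD5 d b c \<longleftrightarrow> p = c \<and> q = b"
    using pq pqV ab by (auto simp: cD1_def cD2_def cW3_def cD4_def cD5_def)
  have a0: "v = (a,b,c) \<Longrightarrow> v \<in> cW3 d b c" using pq m(3) ab by auto
  show ?thesis using cover
  proof (elim disjE)
    assume h: "v = (a,b,c)"
    thus ?thesis using g0 m a0 ab pq by auto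
  next
    assume h: "v \<in> cD1 d b c"
    thus ?thesis using g1 m ab pq by auto
  next
    assume h: "v \<in> cD2 d b c"
    thus ?thesis using g2 m ab pq by auto
  next
    assume h: "v \<in> cW3 d b c - {(a,b,c)}"
    thus ?thesis using g3 m ab pq by auto
  next
    assume h: "v \<in> cD4 d b c"
    thus ?thesis using g4 m ab pq by auto
  next
    assume h: "v \<in> cD5 d b c"
    thus ?thesis using g5 m ab pq by auto
  qed
qed


lemma cD_sub: "b \<le> d \<Longrightarrow> c \<le> d \<Longrightarrow> b \<noteq> c \<Longrightarrow>
   cD1 d b c \<subseteq> CK_V d \<and> cD2 d b c \<subseteq> CK_V d \<and> cW3 d b c \<subseteq> CK_V d \<and> cD4 d b c \<subseteq> CK_V d \<and> cD5 d b c \<subseteq> CK_V d"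
  by (auto simp: cD1_def cD2_def cW3_def cD4_def cD5_def CK_V_def)

lemma CK_levels:
  assumes d: "3 \<le> d" and u: "(a,b,c) \<in> CK_V d"
  shows "{v \<in> CK_V d. gdist (CK_A d) (a,b,c) v = enat i} =
    (if i = 0 then {(a,b,c)} else if i = 1 then cD1 d b c else if i = 2 then cD2 d b c
     else if i = 3 then cW3 d b c - {(a,b,c)} else if i = 4 then cD4 d b c else if i = 5 then cD5 d b c else {})"
proof -
  have ab: "b \<le> d" "c \<le> d" "b \<noteq> c" using u by (auto simp: CK_V_def)
  show ?thesis
    using CK_dist[OF d u] cD_sub[OF ab] u by auto
qed

lemma card_cD:
  assumes ab: "a \<le> d" "b \<le> d" "c \<le> d" "a \<noteq> b" "a \<noteq> c" "b \<noteq> c"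
  shows "card (cD1 d b c) = d - 1" "card (cD2 d b c) = (d - 1)^2"
    "card (cW3 d b c - {(a,b,c)}) = (d - 1)^3 - 1" "card (cD4 d b c) = 2 * (d - 1)^2"
    "card (cD5 d b c) = d - 1"
proof -
  have c: "card ({..d} - {b,c}) = d - 1" using card_minus2 ab by auto
  show "card (cD1 d b c) = d - 1" unfolding cD1_def
    by (subst card_image) (auto intro: inj_onI simp: c)
  show "card (cD5 d b c) = d - 1" unfolding cD5_def
    by (subst card_image) (auto intro: inj_onI simp: c)
  have S: "card (Sigma ({..d} - {b,c}) (\<lambda>p. {..d} - {x,p})) = (d - 1)^2" if "x = b \<or> x = c" for x
  proof -
    have "card (Sigma ({..d} - {b,c}) (\<lambda>p. {..d} - {x,p})) = (\<Sum>p\<in>{..d} - {b,c}. card ({..d} - {x,p}))"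
      by (rule card_SigmaI) auto
    also have "\<dots> = (\<Sum>p\<in>{..d} - {b,c}. d - 1)"
      by (rule sum.cong) (use that ab in \<open>auto simp: card_minus2\<close>)
    finally show ?thesis by (simp add: c power2_eq_square)
  qed
  have S': "card (Sigma ({..d} - {b,c}) (\<lambda>p. {..d} - {p,x})) = (d - 1)^2" if "x = b \<or> x = c" for x
  proof -
    have "(\<lambda>p. {..d} - {p,x}) = (\<lambda>p. {..d} - {x,p})" by (auto simp: insert_commute)
    thus ?thesis using S[OF that] by (simp only:)
  qed
  show "card (cD2 d b c) = (d - 1)^2" unfolding cD2_def
    by (subst card_image) (auto intro: inj_onI simp: S ab simp del: card_SigmaI)
  have A: "card ((\<lambda>(q,r). (b,q,r)) ` Sigma ({..d} - {b,c}) (\<lambda>q. {..d} - {b,q})) = (d-1)^2"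
    by (subst card_image) (auto intro: inj_onI simp: S ab simp del: card_SigmaI)
  have B: "card ((\<lambda>(p,r). (p,c,r)) ` Sigma ({..d} - {b,c}) (\<lambda>p. {..d} - {p,c})) = (d-1)^2"
    by (subst card_image) (auto intro: inj_onI simp: S' ab simp del: card_SigmaI)
  have "card (cD4 d b c) = card ((\<lambda>(q,r). (b,q,r)) ` Sigma ({..d} - {b,c}) (\<lambda>q. {..d} - {b,q}))
     + card ((\<lambda>(p,r). (p,c,r)) ` Sigma ({..d} - {b,c}) (\<lambda>p. {..d} - {p,c}))"
    unfolding cD4_def by (rule card_Un_disjoint) auto
  also have "\<dots> = (d-1)^2 + (d-1)^2" by (simp only: A B)
  finally show "card (cD4 d b c) = 2 * (d - 1)^2" by simp
  have "card (cW3 d b c) = (\<Sum>p\<in>{..d} - {b,c}. card (Sigma ({..d} - {c,p}) (\<lambda>q. {..d} - {p,q})))"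
    unfolding cW3_def by (rule card_SigmaI) auto
  also have "\<dots> = (\<Sum>p\<in>{..d} - {b,c}. (d - 1)^2)"
  proof (rule sum.cong)
    fix p assume p: "p \<in> {..d} - {b,c}"
    have "card (Sigma ({..d} - {c,p}) (\<lambda>q. {..d} - {p,q})) = (\<Sum>q\<in>{..d} - {c,p}. card ({..d} - {p,q}))"
      by (rule card_SigmaI) auto
    also have "\<dots> = (\<Sum>q\<in>{..d} - {c,p}. d - 1)"
      by (rule sum.cong) (use p in \<open>auto simp: card_minus2\<close>)
    finally show "card (Sigma ({..d} - {c,p}) (\<lambda>q. {..d} - {p,q})) = (d - 1)^2"
      using p ab by (simp add: card_minus2 power2_eq_square)
  qed simp
  finally have cw: "card (cW3 d b c) = (d - 1)^3" by (simp add: c power2_eq_square power3_eq_cube)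
  have mem: "(a,b,c) \<in> cW3 d b c" using ab by (auto simp: cW3_def)
  show "card (cW3 d b c - {(a,b,c)}) = (d - 1)^3 - 1"
    by (simp only: card_Diff_singleton[OF mem] cw)
qed

lemma CK_part:
  assumes d: "3 \<le> d" and u: "u \<in> CK_V d"
  shows "nat_dist (CK_V d) (CK_A d) u 0 = 1 \<and>
            nat_dist (CK_V d) (CK_A d) u 1 = d - 1 \<and>
            nat_dist (CK_V d) (CK_A d) u 2 = (d - 1)^2 \<and>
            nat_dist (CK_V d) (CK_A d) u 3 = (d - 1)^3 - 1 \<and>
            nat_dist (CK_V d) (CK_A d) u 4 = 2 * (d - 1)^2 \<and>
            nat_dist (CK_V d) (CK_A d) u 5 = d - 1 \<and>
            (\<forall>i\<ge>6. nat_dist (CK_V d) (CK_A d) u i = 0)"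
proof -
  obtain a b c where u': "u = (a,b,c)" by (cases u) force
  have ab: "a \<le> d" "b \<le> d" "c \<le> d" "a \<noteq> b" "a \<noteq> c" "b \<noteq> c" using u u' by (auto simp: CK_V_def)
  note L = CK_levels[OF d u[unfolded u']]
  show ?thesis unfolding u' nat_dist_def using L card_cD[OF ab] by simp
qed

theorem mainTheorem14:
  fixes d :: nat
  assumes "d \<ge> 3"
  shows "(\<forall>u \<in> sK_V d.
            nat_dist (sK_V d) (sK_A d) u 0 = 1 \<and>
            nat_dist (sK_V d) (sK_A d) u 1 = d - 1 \<and>
            nat_dist (sK_V d) (sK_A d) u 2 = (d - 1)^2 \<and>
            nat_dist (sK_V d) (sK_A d) u 3 = 2 * (d - 1) \<and>
            nat_dist (sK_V d) (sK_A d) u 4 = 1 \<and>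
            (\<forall>i\<ge>5. nat_dist (sK_V d) (sK_A d) u i = 0))
       \<and> antipodal (sK_V d) (sK_A d)
       \<and> (\<forall>u \<in> CK_V d.
            nat_dist (CK_V d) (CK_A d) u 0 = 1 \<and>
            nat_dist (CK_V d) (CK_A d) u 1 = d - 1 \<and>
            nat_dist (CK_V d) (CK_A d) u 2 = (d - 1)^2 \<and>
            nat_dist (CK_V d) (CK_A d) u 3 = (d - 1)^3 - 1 \<and>
            nat_dist (CK_V d) (CK_A d) u 4 = 2 * (d - 1)^2 \<and>
            nat_dist (CK_V d) (CK_A d) u 5 = d - 1 \<and>
            (\<forall>i\<ge>6. nat_dist (CK_V d) (CK_A d) u i = 0))"
  using sK_part[OF assms] sK_antipodal[OF assms] CK_part[OF assms] by blast

end
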